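(* Let $m$ be a positive integer, let $\alpha>1$ with $56^m(\alpha-1)<1$, let $\mathcal{S}$ be an $\alpha$-Carleson family of dyadic cubes in $\mathbb{R}^n$, let $f\ge0$ be locally integrable, and for a positive integer $k$ let $\mathcal{S}_k=\{Q\in\mathcal{S}:\ 56^{-m(k+1)}<\frac{1}{|Q|}\int_Qf\le56^{-km}\}$. For $Q\in\mathcal{S}_k$ put $E_Q=Q\setminus\bigcup_{Q'\in\mathcal{S}_k,\,Q'\subsetneq Q}Q'$. Then for every $Q\in\mathcal{S}_k$, \[ \int_Qf\le\frac{1}{1-56^m(\alpha-1)}\int_{E_Q}f. \]
   Context: A family $\mathcal{S}$ of dyadic cubes is $\alpha$-Carleson ($\alpha>1$) if $\sum_{P\in\mathcal{S},\,P\subseteq Q}|P|\le\alpha|Q|$ for every $Q\in\mathcal{S}$. *)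

theory Defs
  imports "HOL-Analysis.Analysis"
begin

definition dyadic_cube :: "(real ^ 'n) set \<Rightarrow> bool" where
  "dyadic_cube Q \<longleftrightarrow> (\<exists>(j::int) (k::'n \<Rightarrow> int).
     Q = {x. \<forall>i. real_of_int (k i) * 2 powr (- real_of_int j) \<le> x $ i
                \<and> x $ i < (real_of_int (k i) + 1) * 2 powr (- real_of_int j)})"

definition carleson :: "real \<Rightarrow> (real ^ 'n) set set \<Rightarrow> bool" where
  "carleson \<alpha> S \<longleftrightarrow> (\<forall>Q\<in>S. dyadic_cube Q) \<and>
     (\<forall>Q\<in>S. (\<Sum>\<^sub>\<infinity>P\<in>{P\<in>S. P \<subseteq> Q}. emeasure lborel P) \<le> ennreal \<alpha> * emeasure lborel Q)"

definition locally_integrable :: "(real ^ 'n \<Rightarrow> real) \<Rightarrow> bool" where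
  "locally_integrable f \<longleftrightarrow> (\<forall>K. compact K \<longrightarrow> set_integrable lborel K f)"

definition Sk :: "nat \<Rightarrow> nat \<Rightarrow> (real ^ 'n) set set \<Rightarrow> (real ^ 'n \<Rightarrow> real) \<Rightarrow> (real ^ 'n) set set" where
  "Sk m k S f = {Q\<in>S. (1/56::real) ^ (m*(k+1)) < (1 / measure lborel Q) * (LINT x:Q|lborel. f x)
                     \<and> (1 / measure lborel Q) * (LINT x:Q|lborel. f x) \<le> (1/56::real) ^ (k*m)}"

definition EQ :: "(real ^ 'n) set set \<Rightarrow> (real ^ 'n) set \<Rightarrow> (real ^ 'n) set" where
  "EQ T Q = Q - \<Union>{Q'\<in>T. Q' \<subset> Q}"

end

theory Submission
  imports Defs "HOL-Analysis.Analysis"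
begin

lemma dyadic_props:
  assumes "dyadic_cube (Q :: (real^'n) set)"
  shows "Q \<in> sets lborel" "bounded Q"
proof -
  obtain j k where Q: "Q = {x. \<forall>i. real_of_int (k i) * 2 powr (- real_of_int j) \<le> x $ i
                \<and> x $ i < (real_of_int (k i) + 1) * 2 powr (- real_of_int j)}"
    using assms unfolding dyadic_cube_def by blast
  show "Q \<in> sets lborel" unfolding Q by measurable
  have "Q \<subseteq> cbox (\<chi> i. real_of_int (k i) * 2 powr (- real_of_int j)) (\<chi> i. (real_of_int (k i) + 1) * 2 powr (- real_of_int j))"
    unfolding Q by (auto simp: mem_box_cart less_imp_le)
  then show "bounded Q" using bounded_cbox bounded_subset by blast
qed

lemma dyadic_countable: "countable {Q :: (real^'n) set. dyadic_cube Q}"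
proof -
  let ?g = "\<lambda>(j::int, k::'n \<Rightarrow> int). {x :: real^'n. \<forall>i. real_of_int (k i) * 2 powr (- real_of_int j) \<le> x $ i
                \<and> x $ i < (real_of_int (k i) + 1) * 2 powr (- real_of_int j)}"
  have "{Q :: (real^'n) set. dyadic_cube Q} \<subseteq> range ?g"
    unfolding dyadic_cube_def by force
  moreover have "countable (range ?g)" by simp
  ultimately show ?thesis using countable_subset by blast
qed

lemma emeasure_countable_sub:
  assumes "countable U" "U \<subseteq> sets M"
  shows "emeasure M (\<Union>U) \<le> (\<Sum>\<^sub>\<infinity>P\<in>U. emeasure M P)"
proof (cases "U = {}")
  case True then show ?thesis by simp
next
  case False
  define g where "g = from_nat_into U"
  have rg: "range g = U" using False assms(1) by (simp add: g_def range_from_nat_into)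
  define B where "B n = \<Union>(g ` {..<n})" for n
  have Bs: "range B \<subseteq> sets M" using assms(2) rg unfolding B_def by blast
  have inc: "incseq B" unfolding B_def incseq_def by auto (meson less_le_trans lessThan_iff)
  have UB: "\<Union>(range B) = \<Union>U" unfolding B_def using rg by auto
  have "emeasure M (B n) \<le> (\<Sum>\<^sub>\<infinity>P\<in>U. emeasure M P)" for n
  proof -
    have "emeasure M (B n) = emeasure M (\<Union>i\<in>g ` {..<n}. id i)" unfolding B_def by simp
    also have "\<dots> \<le> (\<Sum>i\<in>g ` {..<n}. emeasure M (id i))"
      by (rule emeasure_subadditive_finite) (use assms(2) rg in auto)
    also have "\<dots> = (\<Sum>\<^sub>\<infinity>P\<in>g ` {..<n}. emeasure M P)" by simp
    also have "\<dots> \<le> (\<Sum>\<^sub>\<infinity>P\<in>U. emeasure M P)"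
      by (rule infsum_mono_neutral) (use rg in \<open>auto intro: nonneg_summable_on_complete\<close>)
    finally show ?thesis .
  qed
  then have "(SUP n. emeasure M (B n)) \<le> (\<Sum>\<^sub>\<infinity>P\<in>U. emeasure M P)" by (simp add: SUP_le_iff)
  then show ?thesis using SUP_emeasure_incseq[OF Bs inc] UB by simp
qed

lemma emeasure_density_int:
  fixes f :: "'a::euclidean_space \<Rightarrow> real"
  assumes "set_integrable lborel K f" "A \<in> sets lborel" "A \<subseteq> K" "\<forall>x. f x \<ge> 0"
  shows "emeasure (density lborel (\<lambda>x. ennreal (indicator K x * f x))) A = ennreal (LINT x:A|lborel. f x)"
proof -
  have m: "(\<lambda>x. indicator K x * f x) \<in> borel_measurable lborel"
    using assms(1) unfolding set_integrable_def by (simp add: borel_measurable_integrable)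
  have iA: "set_integrable lborel A f" using set_integrable_subset assms by blast
  have "emeasure (density lborel (\<lambda>x. ennreal (indicator K x * f x))) A
     = (\<integral>\<^sup>+x. ennreal (indicator K x * f x) * indicator A x \<partial>lborel)"
    using emeasure_density[OF _ assms(2)] m by simp
  also have "\<dots> = (\<integral>\<^sup>+x. ennreal (indicator A x * f x) \<partial>lborel)"
    by (rule nn_integral_cong) (use assms(3) in \<open>auto simp: indicator_def\<close>)
  also have "\<dots> = ennreal (LBINT x. indicator A x * f x)"
    using iA assms(4) unfolding set_integrable_def
    by (intro nn_integral_eq_integral) auto
  also have "\<dots> = ennreal (LINT x:A|lborel. f x)" by (simp add: set_lebesgue_integral_def)
  finally show ?thesis .
qed

lemma infsum_cmult_le_ennreal:
  fixes g :: "'a \<Rightarrow> ennreal"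
  shows "(\<Sum>\<^sub>\<infinity>P\<in>U. c * g P) \<le> c * (\<Sum>\<^sub>\<infinity>P\<in>U. g P)"
proof -
  have "sum (\<lambda>P. c * g P) F \<le> c * (\<Sum>\<^sub>\<infinity>P\<in>U. g P)" if "finite F" "F \<subseteq> U" for F
  proof -
    have "sum (\<lambda>P. c * g P) F = c * (\<Sum>\<^sub>\<infinity>P\<in>F. g P)"
      using that(1) by (simp add: sum_distrib_left)
    also have "\<dots> \<le> c * (\<Sum>\<^sub>\<infinity>P\<in>U. g P)"
      by (intro mult_left_mono infsum_mono_neutral) (use that in \<open>auto intro: nonneg_summable_on_complete\<close>)
    finally show ?thesis .
  qed
  then show ?thesis
    by (subst nonneg_infsum_complete) (auto intro: SUP_least)
qed

theorem mainTheorem4: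
  fixes S :: "(real ^ 'n) set set" and f :: "real ^ 'n \<Rightarrow> real"
    and m k :: nat and \<alpha> :: real
  assumes "m > 0" and "\<alpha> > 1" and "56 ^ m * (\<alpha> - 1) < 1"
    and "carleson \<alpha> S"
    and "\<forall>x. f x \<ge> 0" and "locally_integrable f"
    and "k > 0"
    and "Q \<in> Sk m k S f"
  shows "(LINT x:Q|lborel. f x)
           \<le> 1 / (1 - 56 ^ m * (\<alpha> - 1)) * (LINT x:EQ (Sk m k S f) Q|lborel. f x)"
proof -
  define T where "T = Sk m k S f"
  define U where "U = {Q'\<in>T. Q' \<subset> Q}"
  define c :: real where "c = (1/56) ^ (k*m)"
  define d :: real where "d = (1/56) ^ m"
  have c0: "c \<ge> 0" "c > 0" unfolding c_def by auto
  have d0: "d > 0" unfolding d_def by auto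
  have cd: "(1/56::real) ^ (m*(k+1)) = c * d"
    unfolding c_def d_def by (simp add: power_add power_mult mult.commute)
  have d56: "56 ^ m * d = 1" unfolding d_def by (simp add: power_mult_distrib[symmetric])
  have EQ: "EQ T Q = Q - \<Union>U" by (simp add: EQ_def U_def)
  have dyS: "\<forall>P\<in>S. dyadic_cube P" using assms(4) unfolding carleson_def by blast
  have fnn: "\<forall>x. f x \<ge> 0" by fact
  have memT: "P \<in> S \<and> P \<in> sets lborel \<and> bounded P \<and> measure lborel P > 0
      \<and> c * d * measure lborel P < (LINT x:P|lborel. f x)
      \<and> (LINT x:P|lborel. f x) \<le> c * measure lborel P" if "P \<in> T" for P
  proof -
    have PS: "P \<in> S" and l: "c * d < (1 / measure lborel P) * (LINT x:P|lborel. f x)"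
      and u: "(1 / measure lborel P) * (LINT x:P|lborel. f x) \<le> c"
      using that cd unfolding T_def Sk_def c_def by auto
    have dP: "dyadic_cube P" using dyS PS by blast
    have mp: "measure lborel P > 0"
    proof (rule ccontr)
      assume "\<not> measure lborel P > 0"
      then have "measure lborel P = 0" using measure_nonneg[of lborel P] by linarith
      then show False using l c0 d0 by simp (metis mult_pos_pos not_less_iff_gr_or_eq)
    qed
    have "c * d * measure lborel P < (LINT x:P|lborel. f x)"
      using l mp by (simp add: field_simps)
    moreover have "(LINT x:P|lborel. f x) \<le> c * measure lborel P"
      using u mp by (simp add: field_simps)
    ultimately show ?thesis using PS dyadic_props[OF dP] mp by blast
  qed
  have QT: "Q \<in> T" using assms(8) T_def by simp
  note Qf = memT[OF QT]
  define K where "K = closure Q"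
  have cK: "compact K" unfolding K_def using Qf by (simp add: compact_closure)
  have iK: "set_integrable lborel K f" using assms(6) cK unfolding locally_integrable_def by blast
  have QK: "Q \<subseteq> K" unfolding K_def by (rule closure_subset)
  have UQ: "\<Union>U \<subseteq> Q" unfolding U_def by blast
  have Usub: "U \<subseteq> T" unfolding U_def by blast
  have cU: "countable U"
    by (rule countable_subset[OF _ dyadic_countable]) (use Usub memT dyS in blast)
  have Usets: "U \<subseteq> sets lborel" using Usub memT by blast
  have UUs: "\<Union>U \<in> sets lborel" using cU Usets by blast
  have iQ: "set_integrable lborel Q f" using set_integrable_subset[OF iK _ QK] Qf by blast
  have iU: "set_integrable lborel (\<Union>U) f" using set_integrable_subset[OF iQ UUs UQ] .
  have iE: "set_integrable lborel (Q - \<Union>U) f"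
    using set_integrable_subset[OF iQ _ Diff_subset] Qf UUs by blast
  have split: "(LINT x:Q|lborel. f x) = (LINT x:Q - \<Union>U|lborel. f x) + (LINT x:\<Union>U|lborel. f x)"
  proof -
    have "Q = (Q - \<Union>U) \<union> \<Union>U" using UQ by blast
    then have "(LINT x:Q|lborel. f x) = (LINT x:(Q - \<Union>U) \<union> \<Union>U|lborel. f x)" by simp
    also have "\<dots> = (LINT x:Q - \<Union>U|lborel. f x) + (LINT x:\<Union>U|lborel. f x)"
      by (rule set_integral_Un) (use iE iU in auto)
    finally show ?thesis .
  qed
  have mQ: "emeasure lborel Q = ennreal (measure lborel Q)"
  proof -
    have "emeasure lborel Q \<noteq> top" using emeasure_bounded_finite[of Q] Qf by simp
    then show ?thesis by (rule emeasure_eq_ennreal_measure)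
  qed
  have carl: "(\<Sum>\<^sub>\<infinity>P\<in>{P\<in>S. P \<subseteq> Q}. emeasure lborel P) \<le> ennreal \<alpha> * emeasure lborel Q"
    using assms(4) Qf unfolding carleson_def by blast
  have QU: "Q \<notin> U" unfolding U_def by blast
  have "emeasure lborel Q + (\<Sum>\<^sub>\<infinity>P\<in>U. emeasure lborel P) = (\<Sum>\<^sub>\<infinity>P\<in>insert Q U. emeasure lborel P)"
    by (rule infsum_insert[symmetric]) (use QU in \<open>auto intro: nonneg_summable_on_complete\<close>)
  also have "\<dots> \<le> (\<Sum>\<^sub>\<infinity>P\<in>{P\<in>S. P \<subseteq> Q}. emeasure lborel P)"
    by (rule infsum_mono_neutral) (use Qf Usub memT in \<open>auto intro: nonneg_summable_on_complete simp: U_def\<close>)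
  finally have "ennreal (measure lborel Q) + (\<Sum>\<^sub>\<infinity>P\<in>U. emeasure lborel P) \<le> ennreal (\<alpha> * measure lborel Q)"
    using carl mQ assms(2) by (simp add: ennreal_mult)
  then have sumU: "(\<Sum>\<^sub>\<infinity>P\<in>U. emeasure lborel P) \<le> ennreal ((\<alpha> - 1) * measure lborel Q)"
  proof -
    define X where "X = (\<Sum>\<^sub>\<infinity>P\<in>U. emeasure lborel P)"
    have h: "ennreal (measure lborel Q) + X \<le> ennreal (\<alpha> * measure lborel Q)"
      using \<open>ennreal (measure lborel Q) + (\<Sum>\<^sub>\<infinity>P\<in>U. emeasure lborel P) \<le> ennreal (\<alpha> * measure lborel Q)\<close>
      unfolding X_def .
    have "X \<le> ennreal ((\<alpha> - 1) * measure lborel Q)"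
    proof (cases X rule: ennreal_cases)
      case (real x)
      have e: "ennreal (measure lborel Q + x) = ennreal (measure lborel Q) + ennreal x"
        by (rule ennreal_plus) (use real in auto)
      have "ennreal (measure lborel Q + x) \<le> ennreal (\<alpha> * measure lborel Q)"
        using h real e by metis
      then have "measure lborel Q + x \<le> \<alpha> * measure lborel Q"
        using assms(2) measure_nonneg[of lborel Q] by (subst (asm) ennreal_le_iff) auto
      then have "x \<le> (\<alpha> - 1) * measure lborel Q" by (simp add: algebra_simps)
      then show ?thesis using real by (metis ennreal_leI)
    next
      case top
      then show ?thesis using h by (simp add: top_unique)
    qed
    then show ?thesis unfolding X_def .
  qed
  define M where "M = density lborel (\<lambda>x. ennreal (indicator K x * f x))"
  have Mset: "emeasure M A = ennreal (LINT x:A|lborel. f x)" if "A \<in> sets lborel" "A \<subseteq> Q" for A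
    unfolding M_def using emeasure_density_int[OF iK that(1) _ fnn] that QK by blast
  have setsM: "sets M = sets lborel" unfolding M_def by simp
  have "ennreal (LINT x:\<Union>U|lborel. f x) = emeasure M (\<Union>U)" using Mset UUs UQ by simp
  also have "\<dots> \<le> (\<Sum>\<^sub>\<infinity>P\<in>U. emeasure M P)"
    by (rule emeasure_countable_sub) (use cU Usets setsM in auto)
  also have "\<dots> \<le> (\<Sum>\<^sub>\<infinity>P\<in>U. ennreal c * emeasure lborel P)"
  proof (rule infsum_mono)
    fix P assume PU: "P \<in> U"
    then have PT: "P \<in> T" and PQ: "P \<subseteq> Q" using Usub U_def by auto
    note Pf = memT[OF PT]
    have "emeasure M P = ennreal (LINT x:P|lborel. f x)" using Mset Pf PQ by blast
    also have "\<dots> \<le> ennreal (c * measure lborel P)" using Pf by (simp add: ennreal_leI)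
    also have "\<dots> = ennreal c * emeasure lborel P"
    proof -
      have "emeasure lborel P \<noteq> top" using emeasure_bounded_finite[of P] Pf by simp
      then have "emeasure lborel P = ennreal (measure lborel P)" by (rule emeasure_eq_ennreal_measure)
      then show ?thesis using c0 by (simp add: ennreal_mult)
    qed
    finally show "emeasure M P \<le> ennreal c * emeasure lborel P" .
  qed (auto intro: nonneg_summable_on_complete)
  also have "\<dots> \<le> ennreal c * (\<Sum>\<^sub>\<infinity>P\<in>U. emeasure lborel P)"
    by (rule infsum_cmult_le_ennreal)
  also have "\<dots> \<le> ennreal c * ennreal ((\<alpha> - 1) * measure lborel Q)"
    by (rule mult_left_mono[OF sumU]) simp
  also have "\<dots> = ennreal (c * ((\<alpha> - 1) * measure lborel Q))"
    using c0 assms(2) measure_nonneg[of lborel Q] by (simp add: ennreal_mult[symmetric])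
  finally have bU: "(LINT x:\<Union>U|lborel. f x) \<le> c * ((\<alpha> - 1) * measure lborel Q)"
    using c0 assms(2) measure_nonneg[of lborel Q]
    by (subst (asm) ennreal_le_iff) auto
  define IQ where "IQ = (LINT x:Q|lborel. f x)"
  define IE where "IE = (LINT x:Q - \<Union>U|lborel. f x)"
  define \<beta> :: real where "\<beta> = 56 ^ m * (\<alpha> - 1)"
  have b1: "\<beta> < 1" using assms(3) \<beta>_def by simp
  have b0: "\<beta> \<ge> 0" using assms(2) \<beta>_def by simp
  have "c * measure lborel Q \<le> 56 ^ m * IQ"
  proof -
    have "c * d * measure lborel Q < IQ" using Qf IQ_def by simp
    then have "56 ^ m * (c * d * measure lborel Q) \<le> 56 ^ m * IQ" by simp
    moreover have "56 ^ m * (c * d * measure lborel Q) = (56 ^ m * d) * (c * measure lborel Q)"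
      by (simp add: algebra_simps)
    ultimately show ?thesis using d56 by simp
  qed
  then have "(\<alpha> - 1) * (c * measure lborel Q) \<le> (\<alpha> - 1) * (56 ^ m * IQ)"
    using assms(2) by (intro mult_left_mono) auto
  moreover have "\<beta> * IQ = (\<alpha> - 1) * (56 ^ m * IQ)" unfolding \<beta>_def by simp
  moreover have "c * ((\<alpha> - 1) * measure lborel Q) = (\<alpha> - 1) * (c * measure lborel Q)" by simp
  moreover have "IQ = IE + (LINT x:\<Union>U|lborel. f x)" using split IQ_def IE_def by simp
  ultimately have "IQ \<le> IE + \<beta> * IQ" using bU by linarith
  then have "IQ * (1 - \<beta>) \<le> IE" by (simp add: algebra_simps)
  then have "IQ \<le> 1 / (1 - \<beta>) * IE" using b1 by (simp add: field_simps)
  then show ?thesis unfolding IQ_def IE_def \<beta>_def EQ[symmetric] T_def .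
qed

end
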